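(* Let $S$ be a finite set, $B\subseteq S$, and $\gamma,\gamma_B\in(0,1)$. Define $R_B(s) = 1-\gamma_B$ if $s\in B$ and $R_B(s)=0$ otherwise, and $\Gamma_B(s) = \gamma_B$ if $s\in B$ and $\Gamma_B(s)=\gamma$ otherwise. For an infinite sequence $\sigma=\sigma[0]\sigma[1]\dots$ of elements of $S$ and $t\in\mathbb{N}$ let $$G_t(\sigma) = \sum_{i=0}^{\infty} R_B(\sigma[t+i]) \prod_{j=0}^{i-1} \Gamma_B(\sigma[t+j]),$$ with the empty product equal to $1$. Then for every such $\sigma$ and every $t\in\mathbb{N}$, $$0 \le \gamma G_{t+1}(\sigma) \le G_t(\sigma) \le 1-\gamma_B + \gamma_B G_{t+1}(\sigma) \le 1.$$ *)

theory Defs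
  imports "HOL-Analysis.Analysis"
begin

definition R_B :: "'a set \<Rightarrow> real \<Rightarrow> 'a \<Rightarrow> real" where
  "R_B B gB s = (if s \<in> B then 1 - gB else 0)"

definition Gamma_B :: "'a set \<Rightarrow> real \<Rightarrow> real \<Rightarrow> 'a \<Rightarrow> real" where
  "Gamma_B B g gB s = (if s \<in> B then gB else g)"

definition G :: "'a set \<Rightarrow> real \<Rightarrow> real \<Rightarrow> (nat \<Rightarrow> 'a) \<Rightarrow> nat \<Rightarrow> real" where
  "G B g gB \<sigma> t = (\<Sum>i. R_B B gB (\<sigma> (t + i)) * (\<Prod>j<i. Gamma_B B g gB (\<sigma> (t + j))))"

end

theory Submission
  imports Defs
begin

lemma a_shift:
  "R_B B gB (\<sigma> (t + Suc i)) * (\<Prod>j<Suc i. Gamma_B B g gB (\<sigma> (t + j)))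
   = Gamma_B B g gB (\<sigma> t) * (R_B B gB (\<sigma> (Suc t + i)) * (\<Prod>j<i. Gamma_B B g gB (\<sigma> (Suc t + j))))"
  by (simp add: prod.lessThan_Suc_shift del: prod.lessThan_Suc)

lemma a_nonneg:
  assumes "0 < g" "0 < gB" "gB < 1"
  shows "0 \<le> R_B B gB (\<sigma> (t + i)) * (\<Prod>j<i. Gamma_B B g gB (\<sigma> (t + j)))"
  using assms by (intro mult_nonneg_nonneg prod_nonneg) (auto simp: R_B_def Gamma_B_def)

lemma partial_le1:
  fixes n :: nat
  assumes "0 < g" "g < 1" "0 < gB" "gB < 1"
  shows "(\<Sum>i<n. R_B B gB (\<sigma> (t + i)) * (\<Prod>j<i. Gamma_B B g gB (\<sigma> (t + j)))) \<le> 1"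
proof (induction n arbitrary: t)
  case 0
  then show ?case by simp
next
  case (Suc n)
  have "(\<Sum>i<Suc n. R_B B gB (\<sigma> (t + i)) * (\<Prod>j<i. Gamma_B B g gB (\<sigma> (t + j))))
     = R_B B gB (\<sigma> t) + Gamma_B B g gB (\<sigma> t) *
       (\<Sum>i<n. R_B B gB (\<sigma> (Suc t + i)) * (\<Prod>j<i. Gamma_B B g gB (\<sigma> (Suc t + j))))"
    by (simp only: sum.lessThan_Suc_shift a_shift sum_distrib_left) simp
  also have "\<dots> \<le> R_B B gB (\<sigma> t) + Gamma_B B g gB (\<sigma> t) * 1"
    using Suc.IH[of "Suc t"] assms
    by (intro add_left_mono mult_left_mono) (auto simp: Gamma_B_def)
  also have "\<dots> \<le> 1" using assms by (auto simp: R_B_def Gamma_B_def)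
  finally show ?case .
qed

lemma summ:
  assumes "0 < g" "g < 1" "0 < gB" "gB < 1"
  shows "summable (\<lambda>i. R_B B gB (\<sigma> (t + i)) * (\<Prod>j<i. Gamma_B B g gB (\<sigma> (t + j))))"
  by (rule summableI_nonneg_bounded[where x=1], rule a_nonneg[OF assms(1,3,4)], rule partial_le1[OF assms])

lemma G_bounds:
  assumes "0 < g" "g < 1" "0 < gB" "gB < 1"
  shows "0 \<le> G B g gB \<sigma> t \<and> G B g gB \<sigma> t \<le> 1"
  unfolding G_def
  using summ[OF assms] assms a_nonneg partial_le1
  by (auto intro!: suminf_nonneg suminf_le_const)

lemma G_rec:
  assumes "0 < g" "g < 1" "0 < gB" "gB < 1"
  shows "G B g gB \<sigma> t = R_B B gB (\<sigma> t) + Gamma_B B g gB (\<sigma> t) * G B g gB \<sigma> (Suc t)"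
proof -
  let ?a = "\<lambda>t i. R_B B gB (\<sigma> (t + i)) * (\<Prod>j<i. Gamma_B B g gB (\<sigma> (t + j)))"
  have s: "summable (?a t)" "summable (?a (Suc t))" using summ[OF assms] by auto
  have "(\<Sum>i. ?a t (Suc i)) = suminf (?a t) - ?a t 0"
    by (rule suminf_split_head[OF s(1)])
  moreover have "(\<Sum>i. ?a t (Suc i)) = Gamma_B B g gB (\<sigma> t) * suminf (?a (Suc t))"
    by (simp only: a_shift suminf_mult[OF s(2)])
  ultimately show ?thesis unfolding G_def by simp
qed

theorem lemma2:
  fixes S B :: "'a set" and g gB :: real and \<sigma> :: "nat \<Rightarrow> 'a" and t :: nat
  assumes "finite S" and "B \<subseteq> S"
    and "0 < g" "g < 1" "0 < gB" "gB < 1"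
    and "\<And>n. \<sigma> n \<in> S"
  shows "0 \<le> g * G B g gB \<sigma> (t + 1)
    \<and> g * G B g gB \<sigma> (t + 1) \<le> G B g gB \<sigma> t
    \<and> G B g gB \<sigma> t \<le> 1 - gB + gB * G B g gB \<sigma> (t + 1)
    \<and> 1 - gB + gB * G B g gB \<sigma> (t + 1) \<le> 1"
proof -
  define x where "x = G B g gB \<sigma> (Suc t)"
  have x: "0 \<le> x" "x \<le> 1" using G_bounds[OF assms(3-6)] unfolding x_def by auto
  have r: "G B g gB \<sigma> t = R_B B gB (\<sigma> t) + Gamma_B B g gB (\<sigma> t) * x"
    unfolding x_def by (rule G_rec[OF assms(3-6)])
  have k1: "g * x \<le> x" using x assms by (simp add: mult_left_le_one_le)
  have "0 \<le> (1 - gB) * (1 - x)" using x assms by simp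
  then have k2: "x \<le> 1 - gB + gB * x" by (simp add: algebra_simps)
  have k3: "gB * x \<le> gB" using x assms by (simp add: mult_left_le_one_le)
  have k4: "0 \<le> g * x" using x assms by simp
  show ?thesis
    unfolding Suc_eq_plus1[symmetric] x_def[symmetric] r
    using x k1 k2 k3 k4 by (cases "\<sigma> t \<in> B") (simp_all add: R_B_def Gamma_B_def)
qed

end
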